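(* Let $q\ge2$, $n\ge1$, $X=\{0,1,\ldots,q-1\}$, and consider the Insect Markov chain on $X^n$ (defined below). Let $\mathcal{L}=\{L_1,\ldots,L_k\}$ be a partition of $X^n$ with respect to which this chain is lumpable. Let $x_0,y_0\in L_r$ for some $r$, and for $i=0,\ldots,n$ and $s=1,\ldots,k$ put $\lambda_{i,s}=|\{x\in X^n: d(x_0,x)=i,\ x\in L_s\}|$ and $\mu_{i,s}=|\{y\in X^n: d(y_0,y)=i,\ y\in L_s\}|$. Then $\lambda_{i,s}=\mu_{i,s}$ for every $i=0,\ldots,n$ and $s=1,\ldots,k$.
   Context: For $x,y\in X^n$, $d(x,y)=n-\max\{m\in\{0,\ldots,n\}: x_1\cdots x_m=y_1\cdots y_m\}$ (the ultrametric on the boundary of the rooted $q$-ary tree of depth $n$). Set $\alpha_j=\frac{q^j-1}{q^{j+1}-1}$ for $1\le j\le n-1$ and $\alpha_n=0$. The Insect Markov chain on $X^n$ has transition probabilities depending only on $d(x,y)$: if $d(x,y)\in\{0,1\}$, $p(x,y)=q^{-1}(1-\alpha_1)+\sum_{i=2}^nq^{-i}\alpha_1\cdots\alpha_{i-1}(1-\alpha_i)$, and if $d(x,y)=j>1$, $p(x,y)=\sum_{i=j}^nq^{-i}\alpha_1\cdots\alpha_{i-1}(1-\alpha_i)$. A chain is lumpable with respect to a partition if for all parts $L,L'$ the map $x\mapsto\sum_{y\in L'}p(x,y)$ is constant on $L$. *)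

theory Defs
  imports "HOL-Analysis.Analysis" "HOL-Library.Disjoint_Sets"
begin

definition words :: "nat \<Rightarrow> nat \<Rightarrow> nat list set" where
  "words q n = {xs. length xs = n \<and> set xs \<subseteq> {..<q}}"

definition udist :: "nat \<Rightarrow> nat list \<Rightarrow> nat list \<Rightarrow> nat" where
  "udist n x y = n - Max {m. m \<le> n \<and> take m x = take m y}"

definition alpha :: "nat \<Rightarrow> nat \<Rightarrow> nat \<Rightarrow> real" where
  "alpha q n j = (if j = n then 0 else (real q ^ j - 1) / (real q ^ (j + 1) - 1))"

definition insect_term :: "nat \<Rightarrow> nat \<Rightarrow> nat \<Rightarrow> real" where
  "insect_term q n i = (1 / real q ^ i) * (\<Prod>l\<in>{1..<i}. alpha q n l) * (1 - alpha q n i)"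

definition insect_p :: "nat \<Rightarrow> nat \<Rightarrow> nat list \<Rightarrow> nat list \<Rightarrow> real" where
  "insect_p q n x y =
     (let j = udist n x y in
      if j \<le> 1 then (1 / real q) * (1 - alpha q n 1) + (\<Sum>i=2..n. insect_term q n i)
      else (\<Sum>i=j..n. insect_term q n i))"

definition lumpable :: "nat \<Rightarrow> nat \<Rightarrow> nat list set set \<Rightarrow> bool" where
  "lumpable q n P \<longleftrightarrow>
     (\<forall>L\<in>P. \<forall>L'\<in>P. \<forall>x\<in>L. \<forall>x'\<in>L.
        (\<Sum>y\<in>L'. insect_p q n x y) = (\<Sum>y\<in>L'. insect_p q n x' y))"

end

theory Submission
  imports Defs
begin

definition lump :: "nat list set set \<Rightarrow> (nat list \<Rightarrow> nat list \<Rightarrow> real) \<Rightarrow> bool" where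
  "lump P K \<longleftrightarrow> (\<forall>L\<in>P. \<forall>L'\<in>P. \<forall>x\<in>L. \<forall>x'\<in>L. (\<Sum>y\<in>L'. K x y) = (\<Sum>y\<in>L'. K x' y))"

lemma finite_words: "finite (words q n)"
proof -
  have "words q n = {xs. set xs \<subseteq> {..<q} \<and> length xs = n}" by (auto simp: words_def)
  then show ?thesis using finite_lists_length_eq[of "{..<q}" n] by simp
qed

lemma card_words: "card (words q n) = q ^ n"
proof -
  have "words q n = {xs. set xs \<subseteq> {..<q} \<and> length xs = n}" by (auto simp: words_def)
  then show ?thesis using card_lists_length_eq[of "{..<q}" n] by simp
qed

lemma sum_partition:
  assumes "partition_on W P" "finite W"
  shows "sum h W = (\<Sum>L\<in>P. sum h L)"
proof -
  have W: "W = \<Union>P" using partition_onD1[OF assms(1)] .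
  have fin: "\<forall>A\<in>P. finite A" using W assms(2) by (metis Union_upper finite_subset)
  have dis: "\<forall>A\<in>P. \<forall>B\<in>P. A \<noteq> B \<longrightarrow> A \<inter> B = {}"
    using partition_onD2[OF assms(1)] by (meson disjointD)
  show ?thesis using sum.Union_disjoint[OF fin dis, of h] W by simp
qed

lemma lump_lin:
  assumes "lump P K" "lump P M"
  shows "lump P (\<lambda>x y. a * K x y + b * M x y)"
  unfolding lump_def
proof (intro ballI)
  fix L L' x x' assume h: "L \<in> P" "L' \<in> P" "x \<in> L" "x' \<in> L"
  have e: "\<And>u. (\<Sum>y\<in>L'. a * K u y + b * M u y) = a * (\<Sum>y\<in>L'. K u y) + b * (\<Sum>y\<in>L'. M u y)"
    by (simp add: sum.distrib sum_distrib_left)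
  have "(\<Sum>y\<in>L'. K x y) = (\<Sum>y\<in>L'. K x' y)" using assms(1) h unfolding lump_def by blast
  moreover have "(\<Sum>y\<in>L'. M x y) = (\<Sum>y\<in>L'. M x' y)" using assms(2) h unfolding lump_def by blast
  ultimately show "(\<Sum>y\<in>L'. a * K x y + b * M x y) = (\<Sum>y\<in>L'. a * K x' y + b * M x' y)"
    unfolding e by simp
qed

lemma lump_zero: "lump P (\<lambda>x y. 0)"
  unfolding lump_def by simp

lemma lump_cong:
  assumes "lump P K" "partition_on W P" "\<And>x y. x \<in> W \<Longrightarrow> y \<in> W \<Longrightarrow> K x y = M x y"
  shows "lump P M"
proof -
  have sub: "\<And>L. L \<in> P \<Longrightarrow> L \<subseteq> W" using partition_onD1[OF assms(2)] by blast
  show ?thesis unfolding lump_def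
  proof (intro ballI)
    fix L L' x x' assume h: "L \<in> P" "L' \<in> P" "x \<in> L" "x' \<in> L"
    have W: "x \<in> W" "x' \<in> W" "L' \<subseteq> W" using h sub by auto
    have "(\<Sum>y\<in>L'. M x y) = (\<Sum>y\<in>L'. K x y)"
      by (intro sum.cong refl) (metis W assms(3) subsetD)
    also have "\<dots> = (\<Sum>y\<in>L'. K x' y)" using assms(1) h unfolding lump_def by blast
    also have "\<dots> = (\<Sum>y\<in>L'. M x' y)"
      by (intro sum.cong refl) (metis W assms(3) subsetD)
    finally show "(\<Sum>y\<in>L'. M x y) = (\<Sum>y\<in>L'. M x' y)" .
  qed
qed

lemma lump_id:
  assumes "partition_on W P" "finite W"
  shows "lump P (\<lambda>x y. if x = y then 1 else 0)"
  unfolding lump_def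
proof (intro ballI)
  fix L L' x x' assume h: "L \<in> P" "L' \<in> P" "x \<in> L" "x' \<in> L"
  have fin: "finite L'" using h(2) partition_onD1[OF assms(1)] assms(2)
    by (metis Union_upper finite_subset)
  have eq: "x \<in> L' \<longleftrightarrow> x' \<in> L'"
    using h partition_onD2[OF assms(1)] by (metis disjointD disjoint_iff)
  have "\<And>z. (\<Sum>y\<in>L'. (if z = y then 1 else 0::real)) = (if z \<in> L' then 1 else 0)"
    using fin by (simp add: sum.delta)
  then show "(\<Sum>y\<in>L'. (if x = y then 1 else 0::real)) = (\<Sum>y\<in>L'. if x' = y then 1 else 0)"
    using eq by simp
qed

definition kprod :: "nat list set \<Rightarrow> (nat list \<Rightarrow> nat list \<Rightarrow> real) \<Rightarrow> (nat list \<Rightarrow> nat list \<Rightarrow> real) \<Rightarrow> nat list \<Rightarrow> nat list \<Rightarrow> real" where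
  "kprod W K M x y = (\<Sum>z\<in>W. K x z * M z y)"

lemma lump_prod:
  assumes "partition_on W P" "finite W" "lump P K" "lump P M"
  shows "lump P (kprod W K M)"
  unfolding lump_def
proof (intro ballI)
  fix L L' x x' assume h: "L \<in> P" "L' \<in> P" "x \<in> L" "x' \<in> L"
  define g where "g z = (\<Sum>y\<in>L'. M z y)" for z
  have fin: "\<And>A. A \<in> P \<Longrightarrow> finite A" using partition_onD1[OF assms(1)] assms(2)
    by (metis Union_upper finite_subset)
  have key: "\<And>u. (\<Sum>y\<in>L'. kprod W K M u y) = (\<Sum>A\<in>P. \<Sum>z\<in>A. K u z * g z)"
  proof -
    fix u
    have "(\<Sum>y\<in>L'. kprod W K M u y) = (\<Sum>z\<in>W. K u z * g z)"
      unfolding kprod_def g_def by (simp add: sum_distrib_left sum.swap[of _ L'])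
    also have "\<dots> = (\<Sum>A\<in>P. \<Sum>z\<in>A. K u z * g z)" by (rule sum_partition[OF assms(1,2)])
    finally show "(\<Sum>y\<in>L'. kprod W K M u y) = (\<Sum>A\<in>P. \<Sum>z\<in>A. K u z * g z)" .
  qed
  have inner: "(\<Sum>z\<in>A. K x z * g z) = (\<Sum>z\<in>A. K x' z * g z)" if A: "A \<in> P" for A
  proof -
    obtain z0 where z0: "z0 \<in> A" using partition_onD3[OF assms(1)] A by (metis all_not_in_conv)
    have gz: "\<And>z. z \<in> A \<Longrightarrow> g z = g z0" using assms(4) A h(2) z0 unfolding lump_def g_def by blast
    have "(\<Sum>z\<in>A. K x z * g z) = (\<Sum>z\<in>A. K x z) * g z0"
      by (simp add: sum_distrib_right gz)
    also have "\<dots> = (\<Sum>z\<in>A. K x' z) * g z0" using assms(3) h A unfolding lump_def by metis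
    also have "\<dots> = (\<Sum>z\<in>A. K x' z * g z)" by (simp add: sum_distrib_right gz)
    finally show ?thesis .
  qed
  show "(\<Sum>y\<in>L'. kprod W K M x y) = (\<Sum>y\<in>L'. kprod W K M x' y)"
    unfolding key using inner by (simp cong: sum.cong)
qed


definition Ek :: "nat \<Rightarrow> nat \<Rightarrow> nat list \<Rightarrow> nat list \<Rightarrow> real" where
  "Ek n j x y = (if take (n - j) x = take (n - j) y then 1 else 0)"

lemma udist_le_iff: "udist n x y \<le> j \<longleftrightarrow> take (n - j) x = take (n - j) y"
proof -
  define S where "S = {m. m \<le> n \<and> take m x = take m y}"
  have fin: "finite S" unfolding S_def by auto
  have ne: "S \<noteq> {}" unfolding S_def by (metis (mono_tags, lifting) empty_iff le0 mem_Collect_eq take_0)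
  have "udist n x y \<le> j \<longleftrightarrow> n - j \<le> Max S" unfolding udist_def S_def by linarith
  also have "\<dots> \<longleftrightarrow> (\<exists>m\<in>S. n - j \<le> m)" using Max_ge_iff[OF fin ne] by simp
  also have "\<dots> \<longleftrightarrow> take (n - j) x = take (n - j) y"
  proof
    assume "\<exists>m\<in>S. n - j \<le> m"
    then obtain m where "m \<in> S" "n - j \<le> m" by blast
    then show "take (n - j) x = take (n - j) y" unfolding S_def
      by (metis (mono_tags, lifting) mem_Collect_eq min.absorb1 take_take)
  next
    assume "take (n - j) x = take (n - j) y"
    then show "\<exists>m\<in>S. n - j \<le> m" unfolding S_def by (intro bexI[of _ "n - j"]) auto
  qed
  finally show ?thesis .
qed

lemma Ek_udist: "Ek n j x y = (if udist n x y \<le> j then 1 else 0)"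
  unfolding Ek_def udist_le_iff by simp

lemma udist_le_n: "udist n x y \<le> n" unfolding udist_def by simp

lemma card_prefix:
  assumes x: "x \<in> words q n" and a: "a \<le> n"
  shows "card {z\<in>words q n. take a z = take a x} = q ^ (n - a)"
proof -
  have lx: "length x = n" "set x \<subseteq> {..<q}" using x by (auto simp: words_def)
  have "{z\<in>words q n. take a z = take a x} = (\<lambda>w. take a x @ w) ` words q (n - a)"
  proof (intro equalityI subsetI)
    fix z assume z: "z \<in> {z\<in>words q n. take a z = take a x}"
    then have tz: "take a z = take a x" by simp
    have "z = take a x @ drop a z" using append_take_drop_id[of a z] unfolding tz by simp
    moreover have "drop a z \<in> words q (n - a)" using z set_drop_subset[of a z] by (auto simp: words_def)
    ultimately show "z \<in> (\<lambda>w. take a x @ w) ` words q (n - a)" by blast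
  next
    fix z assume "z \<in> (\<lambda>w. take a x @ w) ` words q (n - a)"
    then obtain w where w: "w \<in> words q (n - a)" "z = take a x @ w" by blast
    have "set (take a x) \<subseteq> {..<q}" using lx(2) by (meson order_trans set_take_subset)
    then show "z \<in> {z\<in>words q n. take a z = take a x}"
      using w lx a by (auto simp: words_def)
  qed
  moreover have "inj_on (\<lambda>w. take a x @ w) (words q (n - a))" by (rule inj_onI) simp
  ultimately show ?thesis by (simp add: card_image card_words)
qed

lemma take_mono_eq: "a' \<le> a \<Longrightarrow> take a u = take a v \<Longrightarrow> take a' u = take a' v"
  by (metis min.absorb1 take_take)

lemma Ek_prod:
  assumes x: "x \<in> words q n" and y: "y \<in> words q n" and i: "i \<le> n" and j: "j \<le> n"
  shows "(\<Sum>z\<in>words q n. Ek n i x z * Ek n j z y) = real q ^ min i j * Ek n (max i j) x y"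
proof -
  let ?W = "words q n"
  have "(\<Sum>z\<in>?W. Ek n i x z * Ek n j z y) =
        (\<Sum>z\<in>?W. if take (n-i) x = take (n-i) z \<and> take (n-j) z = take (n-j) y then 1 else 0)"
    unfolding Ek_def by (intro sum.cong) auto
  also have "\<dots> = real (card {z\<in>?W. take (n-i) x = take (n-i) z \<and> take (n-j) z = take (n-j) y})"
    using finite_words by (simp add: sum.If_cases Int_def)
  also have "\<dots> = real q ^ min i j * Ek n (max i j) x y"
  proof (cases "i \<le> j")
    case True
    have "{z\<in>?W. take (n-i) x = take (n-i) z \<and> take (n-j) z = take (n-j) y} =
          (if take (n-j) x = take (n-j) y then {z\<in>?W. take (n-i) z = take (n-i) x} else {})"
      using True by auto (metis diff_le_mono2 take_mono_eq)+
    then show ?thesis using True card_prefix[OF x, of "n-i"] i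
      by (simp add: Ek_def max_def min_def)
  next
    case False
    have "{z\<in>?W. take (n-i) x = take (n-i) z \<and> take (n-j) z = take (n-j) y} =
          (if take (n-i) x = take (n-i) y then {z\<in>?W. take (n-j) z = take (n-j) y} else {})"
      using False by auto (metis diff_le_mono2 nat_le_linear take_mono_eq)+
    then show ?thesis using False card_prefix[OF y, of "n-j"] j
      by (simp add: Ek_def max_def min_def)
  qed
  finally show ?thesis .
qed

definition Ker :: "nat \<Rightarrow> (nat \<Rightarrow> real) \<Rightarrow> nat list \<Rightarrow> nat list \<Rightarrow> real" where
  "Ker n b x y = (\<Sum>j\<le>n. b j * Ek n j x y)"

definition mulc :: "nat \<Rightarrow> (nat \<Rightarrow> real) \<Rightarrow> (nat \<Rightarrow> real) \<Rightarrow> nat \<Rightarrow> real" where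
  "mulc q b c m = b m * (\<Sum>j\<le>m. c j * real q ^ j) + c m * (\<Sum>i<m. b i * real q ^ i)"

lemma double_sum_identity:
  fixes n :: nat and b c Q e :: "nat \<Rightarrow> real"
  shows
  "(\<Sum>i\<le>n. \<Sum>j\<le>n. b i * c j * (Q (min i j) * e (max i j))) =
   (\<Sum>m\<le>n. (b m * (\<Sum>j\<le>m. c j * Q j) + c m * (\<Sum>i<m. b i * Q i)) * e m)"
proof (induction n)
  case 0
  then show ?case by simp
next
  case (Suc n)
  have A: "(\<Sum>i\<le>Suc n. \<Sum>j\<le>Suc n. b i * c j * (Q (min i j) * e (max i j))) =
    (\<Sum>i\<le>n. \<Sum>j\<le>n. b i * c j * (Q (min i j) * e (max i j)))
    + (\<Sum>i\<le>n. b i * c (Suc n) * (Q i * e (Suc n)))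
    + (\<Sum>j\<le>Suc n. b (Suc n) * c j * (Q j * e (Suc n)))"
  proof -
    have m1: "\<And>i. i \<le> n \<Longrightarrow> min i (Suc n) = i \<and> max i (Suc n) = Suc n" by simp
    have m2: "\<And>j. j \<le> Suc n \<Longrightarrow> min (Suc n) j = j \<and> max (Suc n) j = Suc n" by simp
    have "(\<Sum>i\<le>Suc n. \<Sum>j\<le>Suc n. b i * c j * (Q (min i j) * e (max i j))) =
      (\<Sum>i\<le>n. \<Sum>j\<le>Suc n. b i * c j * (Q (min i j) * e (max i j)))
      + (\<Sum>j\<le>Suc n. b (Suc n) * c j * (Q (min (Suc n) j) * e (max (Suc n) j)))"
      by simp
    also have "(\<Sum>j\<le>Suc n. b (Suc n) * c j * (Q (min (Suc n) j) * e (max (Suc n) j)))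
       = (\<Sum>j\<le>Suc n. b (Suc n) * c j * (Q j * e (Suc n)))"
      by (intro sum.cong refl) (simp add: m2)
    also have "(\<Sum>i\<le>n. \<Sum>j\<le>Suc n. b i * c j * (Q (min i j) * e (max i j)))
       = (\<Sum>i\<le>n. \<Sum>j\<le>n. b i * c j * (Q (min i j) * e (max i j)))
         + (\<Sum>i\<le>n. b i * c (Suc n) * (Q i * e (Suc n)))"
      by (simp add: sum.distrib)
    finally show ?thesis .
  qed
  show ?case unfolding A Suc.IH
    by (simp add: algebra_simps sum_distrib_left sum_distrib_right lessThan_Suc_atMost)
qed

lemma Ker_prod:
  assumes x: "x \<in> words q n" and y: "y \<in> words q n"
  shows "kprod (words q n) (Ker n b) (Ker n c) x y = Ker n (mulc q b c) x y"
proof -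
  let ?W = "words q n"
  have "kprod ?W (Ker n b) (Ker n c) x y =
     (\<Sum>z\<in>?W. \<Sum>i\<le>n. \<Sum>j\<le>n. b i * c j * (Ek n i x z * Ek n j z y))"
    unfolding kprod_def Ker_def by (simp add: sum_product algebra_simps)
  also have "\<dots> = (\<Sum>i\<le>n. \<Sum>j\<le>n. b i * c j * (\<Sum>z\<in>?W. Ek n i x z * Ek n j z y))"
    by (simp add: sum.swap[of _ ?W] sum_distrib_left)
  also have "\<dots> = (\<Sum>i\<le>n. \<Sum>j\<le>n. b i * c j * (real q ^ min i j * Ek n (max i j) x y))"
    by (intro sum.cong refl) (simp add: Ek_prod[OF x y])
  also have "\<dots> = Ker n (mulc q b c) x y"
    unfolding double_sum_identity[where Q="\<lambda>k. real q ^ k" and e="\<lambda>k. Ek n k x y"] Ker_def mulc_def ..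
  finally show ?thesis .
qed


definition acoef :: "nat \<Rightarrow> nat \<Rightarrow> nat \<Rightarrow> real" where
  "acoef q n j = (if j = 0 then 0 else if j = 1 then (1 / real q) * (1 - alpha q n 1) else insect_term q n j)"

lemma Ker_udist: "Ker n a x y = (\<Sum>j\<in>{udist n x y..n}. a j)"
proof -
  have "Ker n a x y = (\<Sum>j\<in>{..n}. if udist n x y \<le> j then a j else 0)"
    unfolding Ker_def Ek_udist by (intro sum.cong) auto
  also have "\<dots> = (\<Sum>j\<in>{j\<in>{..n}. udist n x y \<le> j}. a j)"
    by (rule sum.inter_filter[symmetric]) simp
  also have "{j\<in>{..n}. udist n x y \<le> j} = {udist n x y..n}" by auto
  finally show ?thesis .
qed

lemma alpha_bounds:
  assumes q: "q \<ge> 2" and l: "1 \<le> l" "l < n"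
  shows "0 < alpha q n l" "alpha q n l < 1"
proof -
  have q1: "real q \<ge> 2" using q by simp
  have "real q ^ l \<ge> real q ^ 1" using q1 l by (intro power_increasing) auto
  then have A: "real q ^ l - 1 > 0" using q1 by (simp only: power_one_right)
  have "real q ^ (l + 1) = real q * real q ^ l" by simp
  also have "\<dots> > real q ^ l" using q1 A by (simp add: mult_less_cancel_right1)
  finally have B: "real q ^ (l + 1) - 1 > real q ^ l - 1" by simp
  have an: "alpha q n l = (real q ^ l - 1) / (real q ^ (l + 1) - 1)" using l by (simp add: alpha_def)
  show "0 < alpha q n l" unfolding an using A B by simp
  show "alpha q n l < 1" unfolding an using A B by simp
qed

lemma one_minus_alpha_pos:
  assumes q: "q \<ge> 2" and l: "1 \<le> l" "l \<le> n"
  shows "0 < 1 - alpha q n l"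
proof (cases "l = n")
  case True then show ?thesis by (simp add: alpha_def)
next
  case False then show ?thesis using alpha_bounds[OF q l(1)] l by simp
qed

lemma insect_term_pos:
  assumes q: "q \<ge> 2" and j: "1 \<le> j" "j \<le> n"
  shows "0 < insect_term q n j"
proof -
  have "0 < (\<Prod>l\<in>{1..<j}. alpha q n l)"
    by (rule prod_pos) (use alpha_bounds[OF q] j in auto)
  moreover have "0 < 1 / real q ^ j" using q by simp
  ultimately show ?thesis unfolding insect_term_def using one_minus_alpha_pos[OF q j] by simp
qed

lemma acoef_pos:
  assumes q: "q \<ge> 2" and j: "1 \<le> j" "j \<le> n"
  shows "0 < acoef q n j"
  using insect_term_pos[OF q j] one_minus_alpha_pos[OF q order.refl, of n] j q
  unfolding acoef_def by auto

lemma insect_Ker: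
  assumes n: "n \<ge> 1"
  shows "insect_p q n x y = Ker n (acoef q n) x y"
proof -
  define d where "d = udist n x y"
  have dn: "d \<le> n" unfolding d_def by (rule udist_le_n)
  have tail: "(\<Sum>i=m..n. acoef q n i) = (\<Sum>i=m..n. insect_term q n i)" if "m \<ge> 2" for m
    by (intro sum.cong refl) (use that in \<open>auto simp: acoef_def\<close>)
  have s12: "(\<Sum>i=1..n. acoef q n i) = acoef q n 1 + (\<Sum>i=2..n. acoef q n i)"
  proof -
    have "{1..n} = insert 1 {2..n}" using n by auto
    then show ?thesis by simp
  qed
  have s01: "(\<Sum>i=0..n. acoef q n i) = (\<Sum>i=1..n. acoef q n i)"
  proof -
    have "{0..n} = insert 0 {1..n}" by auto
    then show ?thesis by (simp add: acoef_def)
  qed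
  show ?thesis
  proof (cases "d \<le> 1")
    case True
    then have "d = 0 \<or> d = 1" by auto
    then have "Ker n (acoef q n) x y = acoef q n 1 + (\<Sum>i=2..n. acoef q n i)"
      unfolding Ker_udist d_def[symmetric] using s12 s01 by auto
    then show ?thesis unfolding insect_p_def Let_def d_def[symmetric] using True tail[of 2]
      by (simp add: acoef_def)
  next
    case False
    then show ?thesis unfolding insect_p_def Let_def Ker_udist d_def[symmetric] using tail[of d] by simp
  qed
qed

lemma lump_sum:
  assumes "finite I" "\<And>i. i \<in> I \<Longrightarrow> lump P (K i)"
  shows "lump P (\<lambda>x y. \<Sum>i\<in>I. c i * K i x y)"
  using assms
proof (induction I rule: finite_induct)
  case empty
  then show ?case using lump_zero by simp
next
  case (insert a F)
  have "lump P (\<lambda>x y. 1 * (\<Sum>i\<in>F. c i * K i x y) + c a * K a x y)"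
    by (rule lump_lin) (use insert in auto)
  then show ?case using insert by (simp add: add.commute)
qed


lemma chain_step:
  fixes q n k :: nat and b :: "nat \<Rightarrow> real"
  assumes part: "partition_on (words q n) P" and q: "q \<ge> 1" and kn: "k < n"
    and z: "\<forall>j<k. b j = 0" and p: "\<forall>j. k \<le> j \<and> j \<le> n \<longrightarrow> 0 < b j"
    and l: "lump P (Ker n b)"
  shows "\<exists>b'. (\<forall>j<Suc k. b' j = 0) \<and> (\<forall>j. Suc k \<le> j \<and> j \<le> n \<longrightarrow> 0 < b' j) \<and> lump P (Ker n b')"
proof -
  define c where "c = b k * real q ^ k"
  define b' where "b' m = mulc q b b m - c * b m" for m
  have nn: "\<And>i. i \<le> n \<Longrightarrow> 0 \<le> b i" using z p by (metis le_less linorder_not_le)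
  have lm: "lump P (Ker n (mulc q b b))"
    by (rule lump_cong[OF lump_prod[OF part finite_words l l] part]) (rule Ker_prod)
  have "lump P (\<lambda>x y. 1 * Ker n (mulc q b b) x y + (- c) * Ker n b x y)"
    by (rule lump_lin[OF lm l])
  moreover have "(\<lambda>x y. 1 * Ker n (mulc q b b) x y + (- c) * Ker n b x y) = Ker n b'"
    unfolding Ker_def b'_def by (intro ext) (simp add: algebra_simps sum_subtractf sum_distrib_left sum_negf)
  ultimately have L: "lump P (Ker n b')" by simp
  have Z: "b' j = 0" if "j < Suc k" for j
  proof (cases "j < k")
    case True then show ?thesis using z by (simp add: b'_def mulc_def)
  next
    case False
    then have jk: "j = k" using that by simp
    have s0: "(\<Sum>i<k. b i * real q ^ i) = 0" using z by simp
    have s1: "(\<Sum>i\<le>k. b i * real q ^ i) = b k * real q ^ k"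
      using s0 by (simp add: lessThan_Suc_atMost[symmetric])
    show ?thesis unfolding jk b'_def mulc_def s0 s1 c_def by simp
  qed
  have Pp: "0 < b' j" if "Suc k \<le> j" "j \<le> n" for j
  proof -
    define S1 where "S1 = (\<Sum>i<j. b i * real q ^ i)"
    have qp: "0 < real q ^ j" using q by simp
    have bj: "0 < b j" using p that by simp
    have "c \<le> S1" unfolding S1_def c_def
      by (rule member_le_sum) (use that nn q in auto)
    have S2: "0 \<le> S1" unfolding S1_def by (rule sum_nonneg) (use that nn in auto)
    have e: "(\<Sum>i\<le>j. b i * real q ^ i) = S1 + b j * real q ^ j"
      unfolding S1_def by (simp add: lessThan_Suc_atMost[symmetric])
    have eqn: "b' j = b j * ((S1 - c) + b j * real q ^ j + S1)"
      unfolding b'_def mulc_def e S1_def[symmetric] by (simp add: algebra_simps)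
    have bq: "0 < b j * real q ^ j" using bj qp by simp
    have "0 < (S1 - c) + b j * real q ^ j + S1" using \<open>c \<le> S1\<close> S2 bq by linarith
    then show ?thesis unfolding eqn using bj by simp
  qed
  show ?thesis using L Z Pp by blast
qed

lemma chain:
  fixes q n :: nat and b0 :: "nat \<Rightarrow> real"
  assumes part: "partition_on (words q n) P" and q: "q \<ge> 1"
    and p0: "\<forall>j\<le>n. 0 < b0 j" and l0: "lump P (Ker n b0)"
  shows "k \<le> n \<Longrightarrow> \<exists>b. (\<forall>j<k. b j = 0) \<and> (\<forall>j. k \<le> j \<and> j \<le> n \<longrightarrow> 0 < b j) \<and> lump P (Ker n b)"
proof (induction k)
  case 0
  then show ?case using p0 l0 by auto
next
  case (Suc k)
  have kn: "k < n" using Suc.prems by simp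
  then obtain b where b: "\<forall>j<k. b j = 0" "\<forall>j. k \<le> j \<and> j \<le> n \<longrightarrow> 0 < b j" "lump P (Ker n b)"
    using Suc.IH by fastforce
  show ?case by (rule chain_step[OF part q kn b])
qed

lemma extract_step:
  fixes q n k :: nat
  assumes part: "partition_on (words q n) P" and q: "q \<ge> 1"
    and p0: "\<forall>j\<le>n. 0 < b0 j" and l0: "lump P (Ker n b0)"
    and kn: "k \<le> n" and hi: "\<forall>j. k < j \<and> j \<le> n \<longrightarrow> lump P (Ek n j)"
  shows "lump P (Ek n k)"
proof -
  obtain b where z: "\<forall>j<k. b j = 0" and p: "\<forall>j. k \<le> j \<and> j \<le> n \<longrightarrow> 0 < b j"
    and l: "lump P (Ker n b)" using chain[OF part q p0 l0 kn] by blast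
  define R where "R x y = (\<Sum>j\<in>{k<..n}. b j * Ek n j x y)" for x y
  have lR: "lump P R" unfolding R_def by (rule lump_sum) (use hi in auto)
  have dec: "Ker n b x y = b k * Ek n k x y + R x y" for x y
  proof -
    have "Ker n b x y = (\<Sum>j\<in>{k..n}. b j * Ek n j x y)"
      unfolding Ker_def by (rule sum.mono_neutral_right) (use z in auto)
    also have "{k..n} = insert k {k<..n}" using kn by auto
    finally show ?thesis unfolding R_def by simp
  qed
  have bk: "0 < b k" using p kn by simp
  have "lump P (\<lambda>x y. (1 / b k) * Ker n b x y + (- (1 / b k)) * R x y)"
    by (rule lump_lin[OF l lR])
  moreover have "(\<lambda>x y. (1 / b k) * Ker n b x y + (- (1 / b k)) * R x y) = Ek n k"
    using bk by (intro ext) (simp add: dec field_simps)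
  ultimately show ?thesis by simp
qed

lemma all_Ek_lump:
  fixes q n :: nat
  assumes part: "partition_on (words q n) P" and q: "q \<ge> 1"
    and p0: "\<forall>j\<le>n. 0 < b0 j" and l0: "lump P (Ker n b0)"
  shows "\<forall>k. n - m \<le> k \<and> k \<le> n \<longrightarrow> lump P (Ek n k)"
proof (induction m)
  case 0
  show ?case
  proof (intro allI impI)
    fix k assume k: "n - 0 \<le> k \<and> k \<le> n"
    then have kn: "k \<le> n" by simp
    have "\<forall>j. k < j \<and> j \<le> n \<longrightarrow> lump P (Ek n j)"
    proof (intro allI impI)
      fix j assume "k < j \<and> j \<le> n"
      then have False using k by linarith
      then show "lump P (Ek n j)" by simp
    qed
    then show "lump P (Ek n k)" by (rule extract_step[OF part q p0 l0 kn])
  qed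
next
  case (Suc m)
  show ?case
  proof (intro allI impI)
    fix k assume k: "n - Suc m \<le> k \<and> k \<le> n"
    show "lump P (Ek n k)"
    proof (cases "n - m \<le> k")
      case True then show ?thesis using Suc.IH k by blast
    next
      case False
      have "\<forall>j. k < j \<and> j \<le> n \<longrightarrow> lump P (Ek n j)"
      proof (intro allI impI)
        fix j assume j: "k < j \<and> j \<le> n"
        then have "n - m \<le> j" using k False by linarith
        then show "lump P (Ek n j)" using Suc.IH j by blast
      qed
      moreover have "k \<le> n" using k by simp
      ultimately show ?thesis using extract_step[OF part q p0 l0] by blast
    qed
  qed
qed


theorem theorem12:
  fixes q n :: nat and P :: "nat list set set" and Lr :: "nat list set"
    and x0 y0 :: "nat list"
  assumes "q \<ge> 2" and "n \<ge> 1"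
    and "partition_on (words q n) P"
    and "lumpable q n P"
    and "Lr \<in> P" and "x0 \<in> Lr" and "y0 \<in> Lr"
  shows "\<forall>i\<le>n. \<forall>Ls\<in>P.
           card {x \<in> words q n. udist n x0 x = i \<and> x \<in> Ls}
         = card {y \<in> words q n. udist n y0 y = i \<and> y \<in> Ls}"
proof -
  note part = assms(3)
  have q1: "q \<ge> 1" using assms(1) by simp
  define b0 where "b0 j = (if j = 0 then 1 else acoef q n j)" for j
  have p0: "\<forall>j\<le>n. 0 < b0 j" unfolding b0_def using acoef_pos[OF assms(1)] by auto
  have lE0: "lump P (Ek n 0)"
    by (rule lump_cong[OF lump_id[OF part finite_words] part]) (auto simp: Ek_def words_def)
  have lA: "lump P (Ker n (acoef q n))"
    by (rule lump_cong[OF assms(4)[unfolded lumpable_def lump_def[symmetric]] part])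
       (rule insect_Ker[OF assms(2)])
  have "lump P (\<lambda>x y. 1 * Ek n 0 x y + 1 * Ker n (acoef q n) x y)" by (rule lump_lin[OF lE0 lA])
  moreover have "(\<lambda>x y. 1 * Ek n 0 x y + 1 * Ker n (acoef q n) x y) = Ker n b0"
  proof (intro ext)
    fix x y
    have "Ker n b0 x y = (\<Sum>j\<le>n. acoef q n j * Ek n j x y + (if j = 0 then Ek n j x y else 0))"
      unfolding Ker_def b0_def by (intro sum.cong refl) (simp add: acoef_def)
    also have "\<dots> = Ker n (acoef q n) x y + Ek n 0 x y"
      unfolding Ker_def sum.distrib by (simp add: sum.delta)
    finally show "1 * Ek n 0 x y + 1 * Ker n (acoef q n) x y = Ker n b0 x y" by simp
  qed
  ultimately have l0: "lump P (Ker n b0)" by simp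
  have allE: "\<And>k. k \<le> n \<Longrightarrow> lump P (Ek n k)"
    using all_Ek_lump[OF part q1 p0 l0, of n] by simp
  have lD: "lump P (\<lambda>x y. if udist n x y = i then 1 else 0)" if i: "i \<le> n" for i
  proof (cases "i = 0")
    case True
    have "(\<lambda>x y. if udist n x y = i then 1 else 0) = Ek n 0"
      using True by (intro ext) (simp add: Ek_udist)
    then show ?thesis using allE by simp
  next
    case False
    have "lump P (\<lambda>x y. 1 * Ek n i x y + (-1) * Ek n (i - 1) x y)"
      by (rule lump_lin) (use allE i in auto)
    moreover have "(\<lambda>x y. 1 * Ek n i x y + (-1) * Ek n (i - 1) x y) = (\<lambda>x y. if udist n x y = i then 1 else 0)"
      using False by (intro ext) (auto simp: Ek_udist)
    ultimately show ?thesis by simp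
  qed
  have cnt: "real (card {x \<in> words q n. udist n z x = i \<and> x \<in> Ls})
      = (\<Sum>y\<in>Ls. if udist n z y = i then 1 else 0)" if Ls: "Ls \<in> P" for z i Ls
  proof -
    have sub: "Ls \<subseteq> words q n" using partition_onD1[OF part] Ls by blast
    have fin: "finite Ls" using sub finite_words finite_subset by blast
    have "{x \<in> words q n. udist n z x = i \<and> x \<in> Ls} = {y\<in>Ls. udist n z y = i}" using sub by auto
    then show ?thesis using fin by (simp add: sum.If_cases Int_def)
  qed
  show ?thesis
  proof (intro allI impI ballI)
    fix i Ls assume i: "i \<le> n" and Ls: "Ls \<in> P"
    have "real (card {x \<in> words q n. udist n x0 x = i \<and> x \<in> Ls})
        = real (card {y \<in> words q n. udist n y0 y = i \<and> y \<in> Ls})"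
      unfolding cnt[OF Ls] using lD[OF i] assms(5,6,7) Ls unfolding lump_def by blast
    then show "card {x \<in> words q n. udist n x0 x = i \<and> x \<in> Ls}
        = card {y \<in> words q n. udist n y0 y = i \<and> y \<in> Ls}" by simp
  qed
qed

end
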